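(* Fix $\mathcal{D}_n$ and $\hat\theta$ and assume $\tilde J$ is invertible. Let $r\in\{1,\dots,n-1\}$. Define $h_i^{mV}=|y_i^p-\hat y^s(x_i,\hat\theta)|\,(g_i^T\tilde J^{-2}g_i)^{1/2}$, $i=1,\dots,n$, let $h^{mV}_{(1)}\le\dots\le h^{mV}_{(n)}$ be their order statistics, set $h^{mV}_{(n+1)}=\infty$, and assume $h^{mV}_{(n-r)}>0$. Let $k=\min\{s: 0\le s\le r,\ (r-s)h^{mV}_{(n-s)}<\sum_{i=1}^{n-s}h^{mV}_{(i)}\}$ and $M=\frac{1}{r-k}\sum_{i=1}^{n-k}h^{mV}_{(i)}$. Then the probabilities $$\pi_i^{mV}=r\frac{h_i^{mV}\wedge M}{\sum_{j=1}^n(h_j^{mV}\wedge M)},\quad i=1,\dots,n,$$ minimize $\mathrm{tr}(\tilde\Sigma)=\mathrm{tr}(\tilde J^{-1}\tilde V\tilde J^{-1})$ over all $(\pi_1,\dots,\pi_n)$ satisfying $\sum_{i=1}^n\pi_i=r$ and $0<\pi_i\le1$ (i.e. Poisson subsampling with these probabilities is mV-optimal, minimizing the asymptotic MSE of $\tilde\theta$ given $\mathcal{D}_n$).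
   Context: Physical data $\mathcal{D}_n=\{(x_i,y_i^p)\}_{i=1}^n$ with $x_i\in\Omega\subset\mathbb{R}^d$; $\hat y^s(x,\theta)$ is a surrogate of a computer model, differentiable in $\theta\in\Theta\subset\mathbb{R}^q$; $\hat\theta=\arg\min_{\theta\in\Theta}\frac1n\sum_{i=1}^n[y_i^p-\hat y^s(x_i,\theta)]^2$. $g_i=\nabla_\theta\hat y^s(x_i,\hat\theta)$ (column vector). $\tilde J=\frac1n\sum_{i=1}^n\frac{\partial^2[y_i^p-\hat y^s(x_i,\hat\theta)]^2}{\partial\theta\partial\theta^T}$. For subsampling probabilities $\pi_i$, $\tilde V=\frac{4}{n^2}\sum_{i=1}^n\frac{1-\pi_i}{\pi_i}[y_i^p-\hat y^s(x_i,\hat\theta)]^2g_ig_i^T$ and $\tilde\Sigma=\tilde J^{-1}\tilde V\tilde J^{-1}$ (the conditional asymptotic covariance of the Poisson-subsample IPWLS estimator $\tilde\theta=\arg\min_\theta\frac1n\sum_i\frac{a_i}{\pi_i}[y_i^p-\hat y^s(x_i,\theta)]^2$, $a_i\sim\mathrm{Bernoulli}(\pi_i)$ independent). $a\wedge b=\min(a,b)$. *)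

theory Defs
  imports "HOL-Analysis.Analysis"
begin

text \<open>Data are indexed by i in {1..n}. e i is the residual y_i^p - yhat^s(x_i, thetahat),
  g i the gradient vector, J the matrix tilde J.\<close>

definition outer :: "real^'q \<Rightarrow> real^'q^'q" where
  "outer v = (\<chi> a b. v $ a * v $ b)"

definition Vtil :: "nat \<Rightarrow> (nat \<Rightarrow> real) \<Rightarrow> (nat \<Rightarrow> real^'q) \<Rightarrow> (nat \<Rightarrow> real) \<Rightarrow> real^'q^'q" where
  "Vtil n e g p = (4 / (real n)^2) *\<^sub>R
     (\<Sum>i\<in>{1..n}. (((1 - p i) / p i) * (e i)^2) *\<^sub>R outer (g i))"

definition Sigmatil :: "nat \<Rightarrow> (nat \<Rightarrow> real) \<Rightarrow> (nat \<Rightarrow> real^'q) \<Rightarrow> real^'q^'q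
    \<Rightarrow> (nat \<Rightarrow> real) \<Rightarrow> real^'q^'q" where
  "Sigmatil n e g J p = matrix_inv J ** Vtil n e g p ** matrix_inv J"

definition hmv :: "(nat \<Rightarrow> real) \<Rightarrow> (nat \<Rightarrow> real^'q) \<Rightarrow> real^'q^'q \<Rightarrow> nat \<Rightarrow> real" where
  "hmv e g J i = \<bar>e i\<bar> * sqrt (g i \<bullet> ((matrix_inv J ** matrix_inv J) *v g i))"

definition ostat :: "(nat \<Rightarrow> real) \<Rightarrow> nat \<Rightarrow> nat \<Rightarrow> real" where
  "ostat h n j = sort (map h [1..<n+1]) ! (j - 1)"

definition kidx :: "(nat \<Rightarrow> real) \<Rightarrow> nat \<Rightarrow> nat \<Rightarrow> nat" where
  "kidx h n r = (LEAST s. s \<le> r \<and>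
      real (r - s) * ostat h n (n - s) < (\<Sum>i\<in>{1..n-s}. ostat h n i))"

definition Mthr :: "(nat \<Rightarrow> real) \<Rightarrow> nat \<Rightarrow> nat \<Rightarrow> real" where
  "Mthr h n r = (1 / real (r - kidx h n r)) * (\<Sum>i\<in>{1..n - kidx h n r}. ostat h n i)"

definition pimv :: "(nat \<Rightarrow> real) \<Rightarrow> nat \<Rightarrow> nat \<Rightarrow> nat \<Rightarrow> real" where
  "pimv h n r i = real r * (min (h i) (Mthr h n r) / (\<Sum>j\<in>{1..n}. min (h j) (Mthr h n r)))"

end

theory Submission
  imports Defs
begin


lemma hess_est:
  fixes L :: "real^'q \<Rightarrow> real" and Gr :: "real^'q \<Rightarrow> real^'q"
  assumes dL: "\<forall>\<theta>\<in>S. (L has_derivative (\<lambda>v. Gr \<theta> \<bullet> v)) (at \<theta>)"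
    and ball: "ball x0 \<rho> \<subseteq> S"
    and err: "\<forall>y. norm y < d \<longrightarrow> norm (Gr (x0 + y) - Gr x0 - J *v y) \<le> e * norm y"
    and t: "t > 0" "t * (norm u + norm v) < \<rho>" "t * (norm u + norm v) < d" and e: "e \<ge> 0"
  shows "\<bar>L (x0 + t*\<^sub>R u + t*\<^sub>R v) - L (x0 + t*\<^sub>R u) - L (x0 + t*\<^sub>R v) + L x0
           - t^2 * ((J *v v) \<bullet> u)\<bar> \<le> 2 * e * t^2 * (norm u + norm v) * norm u"
proof -
  define \<phi> where "\<phi> s = L (x0 + s *\<^sub>R u + t *\<^sub>R v) - L (x0 + s *\<^sub>R u)" for s
  define \<phi>' where "\<phi>' s = Gr (x0 + s *\<^sub>R u + t *\<^sub>R v) \<bullet> u - Gr (x0 + s *\<^sub>R u) \<bullet> u" for s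
  have nb: "norm (s *\<^sub>R u + t *\<^sub>R v) \<le> t * (norm u + norm v)" "norm (s *\<^sub>R u) \<le> t * (norm u + norm v)"
    if "0 \<le> s" "s \<le> t" for s
  proof -
    have "norm (s *\<^sub>R u + t *\<^sub>R v) \<le> s * norm u + t * norm v"
      using norm_triangle_ineq[of "s *\<^sub>R u" "t *\<^sub>R v"] that t by simp
    also have "\<dots> \<le> t * (norm u + norm v)" using that
      by (simp add: distrib_left mult_right_mono)
    finally show "norm (s *\<^sub>R u + t *\<^sub>R v) \<le> t * (norm u + norm v)" .
    have "norm (s *\<^sub>R u) = s * norm u" using that by simp
    also have "\<dots> \<le> t * (norm u + norm v)" using that
      by (simp add: distrib_left mult_right_mono add_increasing2)
    finally show "norm (s *\<^sub>R u) \<le> t * (norm u + norm v)" .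
  qed
  have inS: "x0 + y \<in> S" if "norm y < \<rho>" for y
    using ball that by (auto simp: dist_norm)
  have dL': "((\<lambda>s. L (x0 + s *\<^sub>R u + c)) has_real_derivative (Gr (x0 + s *\<^sub>R u + c) \<bullet> u)) (at s)"
    if "x0 + s *\<^sub>R u + c \<in> S" for s c
  proof -
    have 1: "((\<lambda>s. x0 + s *\<^sub>R u + c) has_derivative (\<lambda>h. h *\<^sub>R u)) (at s)"
      by (auto intro!: derivative_eq_intros)
    have 2: "(L has_derivative (\<lambda>v. Gr (x0 + s *\<^sub>R u + c) \<bullet> v)) (at (x0 + s *\<^sub>R u + c))"
      using dL that by blast
    have "((\<lambda>s. L (x0 + s *\<^sub>R u + c)) has_derivative (\<lambda>h. Gr (x0 + s *\<^sub>R u + c) \<bullet> (h *\<^sub>R u))) (at s)"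
      using has_derivative_compose[OF 1 2] by (simp add: o_def)
    moreover have "(\<lambda>h. Gr (x0 + s *\<^sub>R u + c) \<bullet> (h *\<^sub>R u)) = (*) (Gr (x0 + s *\<^sub>R u + c) \<bullet> u)"
      by (auto simp: mult.commute)
    ultimately show ?thesis by (simp add: has_field_derivative_def)
  qed
  have der: "(\<phi> has_real_derivative \<phi>' s) (at s)" if "0 \<le> s" "s \<le> t" for s
  proof -
    have a: "x0 + s *\<^sub>R u + t *\<^sub>R v \<in> S" using inS[of "s *\<^sub>R u + t *\<^sub>R v"] nb[OF that] t
      by (simp add: add.assoc)
    have b: "x0 + s *\<^sub>R u + 0 \<in> S" using inS[of "s *\<^sub>R u"] nb[OF that] t by simp
    show ?thesis unfolding \<phi>_def \<phi>'_def
      using DERIV_diff[OF dL'[OF a] dL'[OF b]] by simp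
  qed
  obtain \<xi> where \<xi>: "0 < \<xi>" "\<xi> < t" "\<phi> t - \<phi> 0 = (t - 0) * \<phi>' \<xi>"
    using MVT2[of 0 t \<phi> \<phi>'] der t by auto
  define y1 where "y1 = \<xi> *\<^sub>R u + t *\<^sub>R v"
  define y2 where "y2 = \<xi> *\<^sub>R u"
  have n1: "norm y1 \<le> t * (norm u + norm v)" "norm y2 \<le> t * (norm u + norm v)"
    using nb[of \<xi>] \<xi> unfolding y1_def y2_def by auto
  define E1 where "E1 = Gr (x0 + y1) - Gr x0 - J *v y1"
  define E2 where "E2 = Gr (x0 + y2) - Gr x0 - J *v y2"
  have E1: "norm E1 \<le> e * (t * (norm u + norm v))"
    using err n1 t e unfolding E1_def by (meson dual_order.trans le_less_trans mult_left_mono)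
  have E2: "norm E2 \<le> e * (t * (norm u + norm v))"
    using err n1 t e unfolding E2_def by (meson dual_order.trans le_less_trans mult_left_mono)
  have "\<phi>' \<xi> = (J *v y1 + E1) \<bullet> u - (J *v y2 + E2) \<bullet> u"
    unfolding \<phi>'_def E1_def E2_def y1_def y2_def by (simp add: add.assoc inner_diff_left)
  also have "\<dots> = t * ((J *v v) \<bullet> u) + (E1 - E2) \<bullet> u"
    unfolding y1_def y2_def
    by (simp add: matrix_vector_right_distrib inner_add_left inner_diff_left matrix_vector_mult_scaleR)
  finally have p: "\<phi>' \<xi> = t * ((J *v v) \<bullet> u) + (E1 - E2) \<bullet> u" .
  have "\<bar>(E1 - E2) \<bullet> u\<bar> \<le> norm (E1 - E2) * norm u" by (rule Cauchy_Schwarz_ineq2)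
  also have "\<dots> \<le> (norm E1 + norm E2) * norm u"
    by (simp add: mult_right_mono norm_triangle_ineq4)
  also have "\<dots> \<le> (2 * e * (t * (norm u + norm v))) * norm u"
    using E1 E2 by (intro mult_right_mono) auto
  finally have eb: "\<bar>(E1 - E2) \<bullet> u\<bar> \<le> 2 * e * (t * (norm u + norm v)) * norm u" .
  have "L (x0 + t*\<^sub>R u + t*\<^sub>R v) - L (x0 + t*\<^sub>R u) - L (x0 + t*\<^sub>R v) + L x0 = \<phi> t - \<phi> 0"
    unfolding \<phi>_def by simp
  also have "\<dots> = t * \<phi>' \<xi>" using \<xi> by simp
  finally have "L (x0 + t*\<^sub>R u + t*\<^sub>R v) - L (x0 + t*\<^sub>R u) - L (x0 + t*\<^sub>R v) + L x0
           - t^2 * ((J *v v) \<bullet> u) = t * ((E1 - E2) \<bullet> u)"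
    using p by (simp add: power2_eq_square algebra_simps)
  moreover have "\<bar>t * ((E1 - E2) \<bullet> u)\<bar> \<le> t * (2 * e * (t * (norm u + norm v)) * norm u)"
    using eb t by (simp add: abs_mult mult_left_mono)
  ultimately show ?thesis by (simp add: power2_eq_square algebra_simps)
qed

lemma hess_sym:
  fixes L :: "real^'q \<Rightarrow> real" and Gr :: "real^'q \<Rightarrow> real^'q"
  assumes S: "open S" "x0 \<in> S"
    and dL: "\<forall>\<theta>\<in>S. (L has_derivative (\<lambda>v. Gr \<theta> \<bullet> v)) (at \<theta>)"
    and dG: "(Gr has_derivative (\<lambda>v. J *v v)) (at x0)"
  shows "(J *v v) \<bullet> u = (J *v u) \<bullet> v"
proof (rule ccontr)
  assume ne: "(J *v v) \<bullet> u \<noteq> (J *v u) \<bullet> v"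
  obtain \<rho> where \<rho>: "\<rho> > 0" "ball x0 \<rho> \<subseteq> S" using S openE by blast
  define K where "K = norm u + norm v + 1"
  have K: "K > 0" "norm u + norm v < K" "norm u \<le> K" "norm v \<le> K"
    unfolding K_def by (auto simp: add_nonneg_pos)
  define a where "a = \<bar>(J *v v) \<bullet> u - (J *v u) \<bullet> v\<bar>"
  have a: "a > 0" using ne unfolding a_def by auto
  define e where "e = a / (8 * K^2)"
  have e: "e > 0" using a K unfolding e_def by auto
  obtain d where d: "d > 0" "\<forall>y. norm (y - x0) < d \<longrightarrow>
      norm (Gr y - Gr x0 - J *v (y - x0)) \<le> e * norm (y - x0)"
    using dG e unfolding has_derivative_at_alt by blast
  have err: "\<forall>y. norm y < d \<longrightarrow> norm (Gr (x0 + y) - Gr x0 - J *v y) \<le> e * norm y"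
    using d(2) by (metis add_diff_cancel_left')
  define t where "t = min \<rho> d / (2 * K)"
  have t0: "t > 0" using \<rho> d K unfolding t_def by auto
  have tK: "t * K < \<rho>" "t * K < d" using \<rho> d K unfolding t_def by auto
  have tuv: "t * (norm u + norm v) < \<rho>" "t * (norm u + norm v) < d"
    using tK K t0 by (meson le_less_trans less_imp_le mult_left_mono)+
  have tvu: "t * (norm v + norm u) < \<rho>" "t * (norm v + norm u) < d"
    using tuv by (simp_all add: add.commute)
  define D where "D = L (x0 + t*\<^sub>R u + t*\<^sub>R v) - L (x0 + t*\<^sub>R u) - L (x0 + t*\<^sub>R v) + L x0"
  have 1: "\<bar>D - t^2 * ((J *v v) \<bullet> u)\<bar> \<le> 2 * e * t^2 * (norm u + norm v) * norm u"
    using hess_est[OF dL \<rho>(2) err t0 tuv] e unfolding D_def by simp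
  have 2: "\<bar>D - t^2 * ((J *v u) \<bullet> v)\<bar> \<le> 2 * e * t^2 * (norm v + norm u) * norm v"
    using hess_est[OF dL \<rho>(2) err t0 tvu] e unfolding D_def by (simp add: algebra_simps)
  have b1: "2 * e * t^2 * (norm u + norm v) * norm u \<le> 2 * e * t^2 * K * K"
    using K e t0 by (intro mult_mono) auto
  have b2: "2 * e * t^2 * (norm v + norm u) * norm v \<le> 2 * e * t^2 * K * K"
    using K e t0 by (intro mult_mono) auto
  have "t^2 * a = \<bar>t^2 * ((J *v v) \<bullet> u - (J *v u) \<bullet> v)\<bar>"
    unfolding a_def by (simp add: abs_mult)
  also have "\<dots> = \<bar>(D - t^2 * ((J *v u) \<bullet> v)) - (D - t^2 * ((J *v v) \<bullet> u))\<bar>"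
    by (simp add: algebra_simps)
  also have "\<dots> \<le> \<bar>D - t^2 * ((J *v u) \<bullet> v)\<bar> + \<bar>D - t^2 * ((J *v v) \<bullet> u)\<bar>"
    by (rule abs_triangle_ineq4)
  also have "\<dots> \<le> 4 * e * t^2 * K * K" using 1 2 b1 b2 by linarith
  also have "\<dots> = t^2 * (a / 2)" using K unfolding e_def by (simp add: power2_eq_square field_simps)
  finally have "a \<le> a / 2" using t0 by simp
  thus False using a by simp
qed

lemma trace_mm: "trace (M ** B) = (\<Sum>k\<in>UNIV. \<Sum>j\<in>UNIV. M$k$j * B$j$k)"
  by (simp add: trace_def matrix_matrix_mult_def)

lemma tr_outer: "trace (outer g ** B) = g \<bullet> (B *v g)"
  unfolding trace_mm outer_def matrix_vector_mult_def inner_vec_def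
  apply (simp add: sum_distrib_left)
  apply (subst sum.swap)
  apply (simp add: mult_ac)
  done

lemma tr_lin: "finite I \<Longrightarrow> trace ((c *\<^sub>R (\<Sum>i\<in>I. w i *\<^sub>R M i)) ** B) = c * (\<Sum>i\<in>I. w i * trace (M i ** B))"
  unfolding trace_mm
  by (simp add: sum_component sum_distrib_left sum_distrib_right mult_ac sum.swap[of _ I])

lemma inv_facts: "invertible J \<Longrightarrow> J ** matrix_inv J = mat 1 \<and> matrix_inv J ** J = mat 1"
  unfolding matrix_inv_def invertible_def by (rule someI_ex)

lemma A_sym:
  fixes J :: "real^'q^'q"
  assumes "invertible J" "\<And>u v. (J *v v) \<bullet> u = (J *v u) \<bullet> v"
  shows "(matrix_inv J *v x) \<bullet> y = x \<bullet> (matrix_inv J *v y)"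
proof -
  let ?A = "matrix_inv J"
  have y: "y = J *v (?A *v y)" using inv_facts[OF assms(1)] by (simp add: matrix_vector_mul_assoc)
  have x: "J *v (?A *v x) = x" using inv_facts[OF assms(1)] by (simp add: matrix_vector_mul_assoc)
  have "(?A *v x) \<bullet> y = (?A *v x) \<bullet> (J *v (?A *v y))" using y by simp
  also have "\<dots> = (J *v (?A *v x)) \<bullet> (?A *v y)" using assms(2) by (simp add: inner_commute)
  also have "\<dots> = x \<bullet> (?A *v y)" using x by simp
  finally show ?thesis .
qed

lemma q_nonneg:
  fixes J :: "real^'q^'q"
  assumes "invertible J" "\<And>u v. (J *v v) \<bullet> u = (J *v u) \<bullet> v"
  shows "g \<bullet> ((matrix_inv J ** matrix_inv J) *v g) \<ge> 0"
proof -
  have "g \<bullet> ((matrix_inv J ** matrix_inv J) *v g) = g \<bullet> (matrix_inv J *v (matrix_inv J *v g))"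
    by (simp add: matrix_vector_mul_assoc)
  also have "\<dots> = (matrix_inv J *v g) \<bullet> (matrix_inv J *v g)"
    using A_sym[OF assms] by simp
  finally show ?thesis by simp
qed


lemma sum_sort_eq:
  fixes h :: "nat \<Rightarrow> real"
  shows "(\<Sum>j\<in>{1..n}. f (h j)) = (\<Sum>j\<in>{1..n}. f (ostat h n j))"
proof -
  define xs where "xs = map h [1..<n+1]"
  have len: "length (sort xs) = n" unfolding xs_def by simp
  have "(\<Sum>j\<in>{1..n}. f (h j)) = sum_list (map f xs)"
  proof -
    have e: "set [1..<n+1] = {1..n}" by auto
    have "sum_list (map (f \<circ> h) [1..<n+1]) = sum (f \<circ> h) (set [1..<n+1])"
      by (rule sum_list_distinct_conv_sum_set) simp
    thus ?thesis unfolding e map_map xs_def by (simp only: o_def)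
  qed
  also have "\<dots> = sum_list (map f (sort xs))"
    by (metis mset_map mset_sort sum_mset_sum_list)
  also have "\<dots> = (\<Sum>j<n. f (sort xs ! j))"
    using len by (simp add: sum_list_sum_nth atLeast0LessThan)
  also have "\<dots> = (\<Sum>j\<in>{1..n}. f (sort xs ! (j - 1)))"
  proof -
    have "(\<Sum>j\<in>{1..n}. f (sort xs ! (j - 1))) = (\<Sum>j\<in>{0..<n}. f (sort xs ! j))"
      by (rule sum.reindex_bij_witness[where i="\<lambda>j. j + 1" and j="\<lambda>j. j - 1"]) auto
    thus ?thesis by (simp add: lessThan_atLeast0)
  qed
  finally show ?thesis by (simp add: ostat_def xs_def)
qed

lemma ostat_mono:
  fixes h :: "nat \<Rightarrow> real"
  assumes "1 \<le> i" "i \<le> j" "j \<le> n"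
  shows "ostat h n i \<le> ostat h n j"
  unfolding ostat_def using assms
  by (intro sorted_nth_mono) auto

lemma ostat_in:
  fixes h :: "nat \<Rightarrow> real"
  assumes "1 \<le> j" "j \<le> n"
  shows "\<exists>i\<in>{1..n}. ostat h n j = h i"
proof -
  have "ostat h n j \<in> set (sort (map h [1..<n+1]))"
    unfolding ostat_def using assms by (intro nth_mem) auto
  thus ?thesis by auto
qed

lemma Mthr_props:
  fixes h :: "nat \<Rightarrow> real"
  assumes h0: "\<forall>i\<in>{1..n}. h i \<ge> 0" and r: "1 \<le> r" "r \<le> n - 1"
    and pos: "ostat h n (n - r) > 0"
  shows "Mthr h n r > 0 \<and> (\<Sum>j\<in>{1..n}. min (h j) (Mthr h n r)) = real r * Mthr h n r"
proof -
  let ?o = "ostat h n"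
  define P where "P s \<longleftrightarrow> s \<le> r \<and> real (r - s) * ?o (n - s) < (\<Sum>i\<in>{1..n-s}. ?o i)" for s
  have o0: "?o j \<ge> 0" if "1 \<le> j" "j \<le> n" for j
    using ostat_in[OF that, of h] h0 by auto
  have nr: "n - r \<ge> 1" "n - (r - 1) = n - r + 1" using r by auto
  have Pr1: "P (r - 1)"
  proof -
    have "?o (n - r) \<le> (\<Sum>i\<in>{1..n-r}. ?o i)"
      using nr by (intro member_le_sum) (auto intro: o0)
    hence "(\<Sum>i\<in>{1..n-r}. ?o i) > 0" using pos by simp
    moreover have "real (r - (r - 1)) = 1" using r by simp
    ultimately show ?thesis unfolding P_def using nr by simp
  qed
  define k where "k = kidx h n r"
  have kdef: "k = (LEAST s. P s)" unfolding k_def kidx_def P_def by simp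
  have Pk: "P k" unfolding kdef using Pr1 by (rule LeastI)
  have kle: "k \<le> r - 1" unfolding kdef using Pr1 by (rule Least_le)
  define m where "m = n - k"
  have m: "m \<ge> 1" "m \<le> n" "k + m = n" using kle r unfolding m_def by auto
  define Sm where "Sm = (\<Sum>i\<in>{1..m}. ?o i)"
  have M: "Mthr h n r = Sm / real (r - k)"
    unfolding Mthr_def Sm_def m_def k_def by simp
  have rk: "real (r - k) > 0" using kle r by simp
  have c1: "real (r - k) * ?o m < Sm" using Pk unfolding P_def Sm_def m_def by (simp del: of_nat_diff)
  have om0: "?o m \<ge> 0" using m by (intro o0) auto
  have Sm0: "Sm > 0" using c1 rk om0 by (smt (verit) mult_nonneg_nonneg)
  have Mpos: "Mthr h n r > 0" using M Sm0 rk by simp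
  have lowM: "?o m < Mthr h n r" unfolding M using c1 rk
    by (subst pos_less_divide_eq) (auto simp: mult.commute simp del: of_nat_diff)
  have highM: "Mthr h n r \<le> ?o (m + 1)" if "k \<ge> 1"
  proof -
    have "k - 1 < k" using that by simp
    hence "\<not> P (k - 1)" unfolding kdef by (rule not_less_Least)
    hence np: "\<not> (real (r - (k-1)) * ?o (n - (k-1)) < (\<Sum>i\<in>{1..n-(k-1)}. ?o i))"
      using kle unfolding P_def by auto
    have eq1: "n - (k - 1) = m + 1" using that m unfolding m_def by simp
    have eq2: "real (r - (k - 1)) = real (r - k) + 1" using that kle r by (simp add: of_nat_diff)
    have "\<not> ((real (r - k) + 1) * ?o (m + 1) < (\<Sum>i\<in>{1..m+1}. ?o i))"
      using np unfolding eq1 eq2 .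
    moreover have "(\<Sum>i\<in>{1..m+1}. ?o i) = Sm + ?o (m + 1)"
      unfolding Sm_def by simp
    ultimately have "real (r - k) * ?o (m + 1) \<ge> Sm" by (simp add: distrib_right)
    thus ?thesis unfolding M using rk
      by (subst pos_divide_le_eq) (auto simp: mult.commute simp del: of_nat_diff)
  qed
  have "(\<Sum>j\<in>{1..n}. min (h j) (Mthr h n r)) = (\<Sum>j\<in>{1..n}. min (?o j) (Mthr h n r))"
    by (rule sum_sort_eq)
  also have "\<dots> = (\<Sum>j\<in>{1..m}. min (?o j) (Mthr h n r)) + (\<Sum>j\<in>{m+1..n}. min (?o j) (Mthr h n r))"
  proof -
    have "{1..n} = {1..m} \<union> {m+1..n}" using m by auto
    thus ?thesis by (simp add: sum.union_disjoint)
  qed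
  also have "(\<Sum>j\<in>{1..m}. min (?o j) (Mthr h n r)) = Sm"
    unfolding Sm_def
  proof (rule sum.cong)
    fix j assume "j \<in> {1..m}"
    hence "?o j \<le> ?o m" using m by (intro ostat_mono) auto
    thus "min (?o j) (Mthr h n r) = ?o j" using lowM by simp
  qed simp
  also have "(\<Sum>j\<in>{m+1..n}. min (?o j) (Mthr h n r)) = real k * Mthr h n r"
  proof (cases "k \<ge> 1")
    case True
    have "(\<Sum>j\<in>{m+1..n}. min (?o j) (Mthr h n r)) = (\<Sum>j\<in>{m+1..n}. Mthr h n r)"
    proof (rule sum.cong)
      fix j assume "j \<in> {m+1..n}"
      hence "?o (m+1) \<le> ?o j" using m by (intro ostat_mono) auto
      thus "min (?o j) (Mthr h n r) = Mthr h n r" using highM[OF True] by simp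
    qed simp
    also have "\<dots> = real k * Mthr h n r" using m by simp
    finally show ?thesis .
  next
    case False
    hence "k = 0" by simp
    thus ?thesis using m by simp
  qed
  also have "Sm + real k * Mthr h n r = real r * Mthr h n r"
    using M rk kle r by (simp add: field_simps of_nat_diff)
  finally show ?thesis using Mpos by simp
qed


lemma term_ineq:
  fixes h M x :: real
  assumes h: "h \<ge> 0" and M: "M > 0" and x: "0 < x" "x \<le> 1"
  shows "(1 - min h M / M) / (min h M / M) * h^2 - M^2 * (x - min h M / M) \<le> (1 - x) / x * h^2"
proof (cases "h = 0")
  case True thus ?thesis using M x by simp
next
  case False
  hence hp: "h > 0" using h by simp
  show ?thesis
  proof (cases "h < M")
    case True
    have lhs: "(1 - min h M / M) / (min h M / M) * h^2 - M^2 * (x - min h M / M) = 2*M*h - h^2 - M^2*x"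
      using True hp M by (simp add: field_simps power2_eq_square)
    have rhs: "(1 - x) / x * h^2 = h^2/x - h^2" using x by (simp add: field_simps)
    have "0 \<le> (h - M*x)^2" by simp
    hence "2*M*h*x - M^2*x*x \<le> h^2" by (simp add: power2_eq_square algebra_simps)
    hence "(2*M*h - M^2*x) * x \<le> h^2" by (simp add: algebra_simps)
    hence "2*M*h - M^2*x \<le> h^2 / x" using x by (simp add: pos_le_divide_eq)
    thus ?thesis unfolding lhs rhs by simp
  next
    case False
    hence mn: "min h M = M" by simp
    have "M^2 \<le> h^2" using False M by (simp add: power_mono)
    also have "h^2 \<le> h^2 / x" using x by (simp add: le_divide_eq mult_left_le)
    finally have "M^2 * (1 - x) \<le> h^2 / x * (1 - x)" using x by (intro mult_right_mono) auto
    thus ?thesis unfolding mn using M x by (simp add: algebra_simps)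
  qed
qed
theorem theorem2:
  fixes n r :: nat
    and x :: "nat \<Rightarrow> real^'d" and \<Omega> :: "(real^'d) set"
    and yp :: "nat \<Rightarrow> real"
    and ys :: "real^'d \<Rightarrow> real^'q \<Rightarrow> real"
    and \<Theta> :: "(real^'q) set" and thetahat :: "real^'q"
    and g :: "nat \<Rightarrow> real^'q"
    and S :: "(real^'q) set" and Gr :: "real^'q \<Rightarrow> real^'q"
    and J :: "real^'q^'q"
  assumes x_in: "\<forall>i\<in>{1..n}. x i \<in> \<Omega>"
    and argmin: "thetahat \<in> \<Theta> \<and> (\<forall>\<theta>\<in>\<Theta>.
        (1 / real n) * (\<Sum>i\<in>{1..n}. (yp i - ys (x i) thetahat)^2)
          \<le> (1 / real n) * (\<Sum>i\<in>{1..n}. (yp i - ys (x i) \<theta>)^2))"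
    and grad: "\<forall>i\<in>{1..n}. (ys (x i) has_derivative (\<lambda>v. g i \<bullet> v)) (at thetahat)"
    and S_open: "open S" and theta_S: "thetahat \<in> S"
    and loss_grad: "\<forall>\<theta>\<in>S. ((\<lambda>\<theta>'. (1 / real n) * (\<Sum>i\<in>{1..n}. (yp i - ys (x i) \<theta>')^2))
                        has_derivative (\<lambda>v. Gr \<theta> \<bullet> v)) (at \<theta>)"
    and hessian: "(Gr has_derivative (\<lambda>v. J *v v)) (at thetahat)"
    and J_inv: "invertible J"
    and r_range: "1 \<le> r \<and> r \<le> n - 1"
    and pos: "ostat (hmv (\<lambda>i. yp i - ys (x i) thetahat) g J) n (n - r) > 0"
  shows "let e = (\<lambda>i. yp i - ys (x i) thetahat);
             h = hmv e g J;
             p = pimv h n r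
         in (\<Sum>i\<in>{1..n}. p i) = real r \<and> (\<forall>i\<in>{1..n}. 0 \<le> p i \<and> p i \<le> 1) \<and>
            (\<forall>i\<in>{1..n}. h i > 0 \<longrightarrow> 0 < p i) \<and>
            (\<forall>\<pi>. (\<Sum>i\<in>{1..n}. \<pi> i) = real r \<and> (\<forall>i\<in>{1..n}. 0 < \<pi> i \<and> \<pi> i \<le> 1)
               \<longrightarrow> trace (Sigmatil n e g J p) \<le> trace (Sigmatil n e g J \<pi>))"
proof -
  define e where "e = (\<lambda>i. yp i - ys (x i) thetahat)"
  define h where "h = hmv e g J"
  define p where "p = pimv h n r"
  define A where "A = matrix_inv J"
  define q where "q i = g i \<bullet> ((A ** A) *v g i)" for i
  define M where "M = Mthr h n r"
  have Jsym: "\<And>u v. (J *v v) \<bullet> u = (J *v u) \<bullet> v"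
    using hess_sym[OF S_open theta_S loss_grad hessian] by blast
  have q0: "q i \<ge> 0" for i unfolding q_def A_def by (rule q_nonneg[OF J_inv Jsym])
  have hq: "h i = \<bar>e i\<bar> * sqrt (q i)" for i unfolding h_def hmv_def q_def A_def by simp
  have h0: "h i \<ge> 0" for i unfolding hq using q0 by simp
  have hsq: "(h i)^2 = (e i)^2 * q i" for i unfolding hq using q0 by (simp add: power_mult_distrib)
  have MP: "M > 0 \<and> (\<Sum>j\<in>{1..n}. min (h j) M) = real r * M"
    unfolding M_def using Mthr_props[of n h r] h0 r_range pos unfolding h_def e_def by blast
  have rpos: "real r > 0" using r_range by simp
  have pval: "p i = min (h i) M / M" for i
    unfolding p_def pimv_def M_def[symmetric] using MP rpos by simp
  have tr: "trace (Sigmatil n e g J \<pi>) = 4 / (real n)^2 * (\<Sum>i\<in>{1..n}. (1 - \<pi> i) / \<pi> i * (h i)^2)" for \<pi>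
  proof -
    have "trace (Sigmatil n e g J \<pi>) = trace ((A ** Vtil n e g \<pi>) ** A)"
      unfolding Sigmatil_def A_def by simp
    also have "\<dots> = trace (A ** (A ** Vtil n e g \<pi>))" by (rule trace_mul_sym)
    also have "\<dots> = trace ((A ** A) ** Vtil n e g \<pi>)" by (simp add: matrix_mul_assoc)
    also have "\<dots> = trace (Vtil n e g \<pi> ** (A ** A))" by (rule trace_mul_sym)
    also have "\<dots> = 4 / (real n)^2 * (\<Sum>i\<in>{1..n}. ((1 - \<pi> i) / \<pi> i * (e i)^2) * trace (outer (g i) ** (A ** A)))"
      unfolding Vtil_def by (rule tr_lin) simp
    also have "\<dots> = 4 / (real n)^2 * (\<Sum>i\<in>{1..n}. (1 - \<pi> i) / \<pi> i * (h i)^2)"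
      by (simp add: tr_outer hsq q_def mult.assoc)
    finally show ?thesis .
  qed
  have sum_p: "(\<Sum>i\<in>{1..n}. p i) = real r"
  proof -
    have "(\<Sum>i\<in>{1..n}. p i) = (\<Sum>i\<in>{1..n}. min (h i) M) / M"
      unfolding pval by (simp add: sum_divide_distrib)
    thus ?thesis using MP by simp
  qed
  have prange: "0 \<le> p i \<and> p i \<le> 1" for i
    unfolding pval using MP h0[of i] by (auto simp: min_def)
  have ppos: "h i > 0 \<longrightarrow> 0 < p i" for i
    unfolding pval using MP by (auto simp: min_def)
  have opt: "trace (Sigmatil n e g J p) \<le> trace (Sigmatil n e g J \<pi>)"
    if \<pi>s: "(\<Sum>i\<in>{1..n}. \<pi> i) = real r" and \<pi>r: "\<forall>i\<in>{1..n}. 0 < \<pi> i \<and> \<pi> i \<le> 1" for \<pi>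
  proof -
    have "(\<Sum>i\<in>{1..n}. (1 - p i) / p i * (h i)^2)
        = (\<Sum>i\<in>{1..n}. (1 - p i) / p i * (h i)^2 - M^2 * (\<pi> i - p i))"
      using \<pi>s sum_p by (simp add: sum_subtractf sum_distrib_left[symmetric])
    also have "\<dots> \<le> (\<Sum>i\<in>{1..n}. (1 - \<pi> i) / \<pi> i * (h i)^2)"
      unfolding pval using term_ineq h0 MP \<pi>r by (intro sum_mono) auto
    finally have "(\<Sum>i\<in>{1..n}. (1 - p i) / p i * (h i)^2) \<le> (\<Sum>i\<in>{1..n}. (1 - \<pi> i) / \<pi> i * (h i)^2)" .
    thus ?thesis unfolding tr by (intro mult_left_mono) auto
  qed
  show ?thesis
    unfolding Let_def e_def[symmetric] h_def[symmetric] p_def[symmetric]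
    using sum_p prange ppos opt by blast
qed

end
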